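(* Let $m,k$ be positive integers. Define on $\mathbb{F}_{2^m}\times\mathbb{F}_{2^m}$ \[f_1(x,y)=(x^{2^k+1}+xy^{2^k}+y^{2^k+1},\;x^{2^{2k}+1}+x^{2^{2k}}y+y^{2^{2k}+1}),\] \[f_2(x,y)=(x^{2^k+1}+xy^{2^k}+y^{2^k+1},\;x^{2^{3k}}y+xy^{2^{3k}}).\] If $\gcd(3k,m)=1$, then $f_1$ is an almost-3-to-1 APN map. If $\gcd(3k,m)=1$ and $m$ is odd, then $f_2$ is an almost-3-to-1 APN map.
   Context: A map $F$ on $\mathbb{F}_{2^m}\times\mathbb{F}_{2^m}$ (an $\mathbb{F}_2$-vector space) is APN if for every nonzero $a$ and every $b$ the equation $F(z+a)+F(z)=b$ has at most 2 solutions. $F$ is almost-3-to-1 if there is a unique element of its image with exactly one preimage and every other element of the image has exactly 3 preimages. *)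

theory Defs
  imports Main "HOL-Library.Product_Plus"
begin

definition APN :: "('v::{ab_group_add,finite} \<Rightarrow> 'w::ab_group_add) \<Rightarrow> bool" where
  "APN F \<longleftrightarrow> (\<forall>a b. a \<noteq> 0 \<longrightarrow> card {z. F (z + a) + F z = b} \<le> 2)"

definition almost_3_to_1 :: "('v::finite \<Rightarrow> 'w) \<Rightarrow> bool" where
  "almost_3_to_1 F \<longleftrightarrow>
     (\<exists>!y. y \<in> range F \<and> card (F -` {y}) = 1) \<and>
     (\<forall>y \<in> range F. card (F -` {y}) \<noteq> 1 \<longrightarrow> card (F -` {y}) = 3)"

definition f1 :: "nat \<Rightarrow> ('a::field \<times> 'a) \<Rightarrow> 'a \<times> 'a" where
  "f1 k = (\<lambda>(x, y).
     (x ^ (2^k + 1) + x * y ^ (2^k) + y ^ (2^k + 1),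
      x ^ (2^(2*k) + 1) + x ^ (2^(2*k)) * y + y ^ (2^(2*k) + 1)))"

definition f2 :: "nat \<Rightarrow> ('a::field \<times> 'a) \<Rightarrow> 'a \<times> 'a" where
  "f2 k = (\<lambda>(x, y).
     (x ^ (2^k + 1) + x * y ^ (2^k) + y ^ (2^k + 1),
      x ^ (2^(3*k)) * y + x * y ^ (2^(3*k))))"

end

theory Submission
  imports Defs
begin


lemma char2_of_card:
  assumes card: "card (UNIV::'a::{field,finite} set) = 2^m" and m: "m>0" shows "(2::'a) = 0"
proof (rule ccontr)
  assume t: "(2::'a) \<noteq> 0"
  have neq: "- x \<noteq> x" if "x \<noteq> 0" for x :: 'a
  proof
    assume "- x = x"
    then have "2 * x = 0" by (metis add.inverse_neutral add_eq_0_iff mult_2)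
    then show False using t that by simp
  qed
  define C where "C = (\<lambda>x::'a. {x, - x}) ` (UNIV - {0})"
  have U: "\<Union>C = UNIV - {0}" unfolding C_def by auto
  have "2 dvd card (\<Union>C)"
  proof (rule dvd_partition)
    show "finite (\<Union>C)" by simp
    show "\<forall>c\<in>C. 2 dvd card c"
    proof
      fix c assume "c \<in> C"
      then obtain x where x0: "x \<noteq> 0" and c: "c = {x, - x}" unfolding C_def by auto
      have "x \<noteq> - x" using neq[OF x0] by metis
      then have "card c = 2" unfolding c by simp
      then show "2 dvd card c" by simp
    qed
    show "\<forall>c1\<in>C. \<forall>c2\<in>C. c1 \<noteq> c2 \<longrightarrow> c1 \<inter> c2 = {}" unfolding C_def by auto
  qed
  then have "2 dvd card (UNIV - {0::'a})" using U by simp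
  moreover have "card (UNIV - {0::'a}) = 2^m - 1" using card by (simp add: card_Diff_singleton)
  moreover have "odd ((2::nat)^m - 1)" using m by (simp add: odd_pos)
  ultimately show False by simp
qed

lemma field_power_card:
  fixes x :: "'a::{field,finite}"
  shows "x ^ card (UNIV :: 'a set) = x"
proof (cases "x = 0")
  case False
  have "x * (\<Prod>y\<in>UNIV-{0}. x * y) = x * x ^ (card (UNIV :: 'a set) - 1) * \<Prod>(UNIV-{0})"
    by (simp add: prod.distrib mult_ac)
  also have "x * x ^ (card (UNIV :: 'a set) - 1) = x ^ Suc (card (UNIV :: 'a set) - 1)"
    by (subst power_Suc) auto
  also have "Suc (card (UNIV :: 'a set) - 1) = card (UNIV :: 'a set)"
    using finite_UNIV_card_ge_0[where ?'a = 'a] by simp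
  also have "(\<Prod>y\<in>UNIV-{0}. x * y) = (\<Prod>y\<in>UNIV-{0}. y)"
    by (rule prod.reindex_bij_witness[of _ "\<lambda>y. y / x" "\<lambda>y. x * y"]) (use False in auto)
  finally show ?thesis
    by simp
qed (use finite_UNIV_card_ge_0[where ?'a = 'a] in auto)

definition sg :: "nat \<Rightarrow> 'a::field \<Rightarrow> 'a" where "sg k x = x ^ (2^k)"

lemma add_self_char2: assumes "(2::'a::comm_ring_1) = 0" shows "x + x = (0::'a)"
proof -
  have "x + x = 2 * x" by simp
  then show ?thesis using assms by simp
qed

lemma neg_char2: assumes "(2::'a::comm_ring_1) = 0" shows "- x = (x::'a)"
proof -
  have "x + x = 2 * x" by simp
  then have "x + x = 0" using assms by simp
  then show ?thesis by (metis add_eq_0_iff)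
qed

lemma frob_sq: assumes "(2::'a::comm_ring_1) = 0" shows "(x+y)^2 = x^2 + (y::'a)^2"
proof -
  have "(x+y)^2 = x^2+y^2+2*(x*y)" by (simp add: power2_eq_square algebra_simps)
  then show ?thesis using assms by simp
qed

lemma frob_pow: assumes "(2::'a::comm_ring_1) = 0" shows "(x+y)^(2^j) = x^(2^j) + (y::'a)^(2^j)"
proof (induction j)
  case 0 then show ?case by simp
next
  case (Suc j)
  have "(x+y)^(2^Suc j) = ((x+y)^(2^j))^2" by (simp add: power_mult[symmetric] mult.commute)
  also have "\<dots> = (x^(2^j))^2 + (y^(2^j))^2" using Suc frob_sq[OF assms] by simp
  also have "\<dots> = x^(2^Suc j) + y^(2^Suc j)" by (simp add: power_mult[symmetric] mult.commute)
  finally show ?case .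
qed

context fixes k :: nat assumes two: "(2::'a::field) = 0" begin

lemma sg_add[simp]: "sg k (x + y) = sg k x + sg k (y::'a)"
  unfolding sg_def by (rule frob_pow[OF two])
lemma sg_mult[simp]: "sg k (x * y) = sg k x * sg k (y::'a)"
  unfolding sg_def by (simp add: power_mult_distrib)
lemma sg_1[simp]: "sg k (1::'a) = 1" unfolding sg_def by simp
lemma sg_0[simp]: "sg k (0::'a) = 0" unfolding sg_def by simp
lemma sg_pow[simp]: "sg k ((x::'a) ^ n) = (sg k x) ^ n"
  unfolding sg_def by (simp add: power_mult[symmetric] mult.commute)
lemma sg_eq0[simp]: "sg k (x::'a) = 0 \<longleftrightarrow> x = 0" unfolding sg_def by simp
lemma sg_inj: "sg k (x::'a) = sg k y \<Longrightarrow> x = y"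
proof -
  assume h: "sg k x = sg k y"
  have "(x+y)^(2^k) = x^(2^k)+y^(2^k)" by (rule frob_pow[OF two])
  also have "\<dots> = 0" using h add_self_char2[OF two] unfolding sg_def by simp
  finally have "x + y = 0" by simp
  then show "x = y" using neg_char2[OF two] by (metis add_eq_0_iff)
qed
lemma sg_eq[simp]: "sg k (x::'a) = sg k y \<longleftrightarrow> x = y" using sg_inj by blast
lemma sg_div[simp]: "sg k ((x::'a) / y) = sg k x / sg k y" unfolding sg_def by (simp add: power_divide)
lemma sg_inverse[simp]: "sg k (inverse (x::'a)) = inverse (sg k x)" unfolding sg_def by (simp add: power_inverse)

end

lemma sg_sg: "sg k (sg k x) = x ^ (2^(2*k))"
  unfolding sg_def by (simp add: power_mult[symmetric] power_add[symmetric] mult_2)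
lemma sg_sg_sg: "sg k (sg k (sg k x)) = x ^ (2^(3*k))"
proof -
  have "(2::nat)^(3*k) = 2^k*2^k*2^k" by (simp add: power_add[symmetric] numeral_3_eq_3)
  then show ?thesis unfolding sg_def by (simp add: power_mult[symmetric])
qed

lemma pow_iter: assumes "x ^ (2^e) = (x::'a::comm_ring_1)" shows "x ^ (2^(e*a)) = x"
proof (induction a)
  case 0 then show ?case by simp
next
  case (Suc a)
  have "x ^ (2^(e*Suc a)) = (x ^ (2^(e*a))) ^ (2^e)" by (simp add: power_add power_mult[symmetric] ac_simps)
  then show ?case using Suc assms by simp
qed

lemma fixed_F2:
  fixes x :: "'a::{field,finite}"
  assumes card: "card (UNIV::'a set) = 2^m" and g: "gcd e m = 1" and fx: "x ^ (2^e) = x"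
  shows "x = 0 \<or> x = 1"
proof -
  have pm: "x ^ (2^m) = x" using field_power_card[of x] card by simp
  have sq: "x^2 = x"
  proof (cases "e = 0")
    case True
    then have "m = 1" using g by simp
    then show ?thesis using pm by simp
  next
    case False
    obtain a b where ab: "e * a = m * b + gcd e m" using bezout_nat[OF False] by blast
    have "x = x ^ (2^(e*a))" using pow_iter[OF fx] by simp
    also have "\<dots> = (x ^ (2^(m*b)))^2" using ab g by (simp add: power_mult[symmetric] mult.commute)
    also have "\<dots> = x^2" using pow_iter[OF pm] by simp
    finally show ?thesis by simp
  qed
  then have "x * (x - 1) = 0" by (simp add: algebra_simps power2_eq_square)
  then show ?thesis by auto
qed



lemma APN_of_kernel:
  fixes F :: "'v::{ab_group_add,finite} \<Rightarrow> 'w::ab_group_add"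
  assumes Badd: "\<And>a z1 z2. F(z1+z2+a) - F(z1+z2) - F a = (F(z1+a) - F z1 - F a) + (F(z2+a) - F z2 - F a)"
    and ker: "\<And>a u. a \<noteq> 0 \<Longrightarrow> F(u+a) - F u - F a = 0 \<Longrightarrow> u = 0 \<or> u = a"
    and neg: "\<And>w::'w. -w = w"
  shows "APN F"
  unfolding APN_def
proof (intro allI impI)
  fix a :: 'v and b :: 'w
  assume a0: "a \<noteq> 0"
  let ?S = "{z. F (z + a) + F z = b}"
  show "card ?S \<le> 2"
  proof (cases "?S = {}")
    case True then show ?thesis by simp
  next
    case False
    then obtain z0 where z0: "F (z0 + a) + F z0 = b" by auto
    have sub: "?S \<subseteq> {z0, z0 + a}"
    proof
      fix z assume "z \<in> ?S"
      then have z: "F (z + a) + F z = b" by simp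
      define d where "d = z - z0"
      have zd: "z = d + z0" unfolding d_def by simp
      have "F(z+a) - F z - F a = (F(d+a) - F d - F a) + (F(z0+a) - F z0 - F a)"
        using Badd[of d z0 a] zd by simp
      moreover have "F(z+a) - F z = b" using z neg[of "F z"] by (metis diff_conv_add_uminus)
      moreover have "F(z0+a) - F z0 = b" using z0 neg[of "F z0"] by (metis diff_conv_add_uminus)
      ultimately have "F(d+a) - F d - F a = 0" by (simp add: algebra_simps)
      then have "d = 0 \<or> d = a" using ker[OF a0] by blast
      then show "z \<in> {z0, z0 + a}" using zd by (auto simp: add.commute)
    qed
    have "card ?S \<le> card {z0, z0 + a}" by (rule card_mono) (auto simp: sub)
    also have "\<dots> \<le> 2" by (simp add: card_insert_if)
    finally show ?thesis .
  qed
qed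

lemma a3_of_kernel:
  fixes F :: "'v::{ab_group_add,finite} \<Rightarrow> 'w::ab_group_add" and L :: "'v \<Rightarrow> 'v"
  assumes Badd: "\<And>a z1 z2. F(z1+z2+a) - F(z1+z2) - F a = (F(z1+a) - F z1 - F a) + (F(z2+a) - F z2 - F a)"
    and ker: "\<And>a u. a \<noteq> 0 \<Longrightarrow> F(u+a) - F u - F a = 0 \<Longrightarrow> u = 0 \<or> u = a"
    and negv: "\<And>v::'v. -v = v"
    and Linv: "\<And>z. F (L z) = F z" and L3: "\<And>z. L (L (L z)) = z"
    and Lfix: "\<And>z. L z = z \<Longrightarrow> z = 0" and Lrel: "\<And>z. L z + z = L (L z)"
  shows "almost_3_to_1 F"
proof -
  have aa: "\<And>v::'v. v + v = 0" using negv by (metis add.right_inverse)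
  have L0: "L 0 = 0" using Lrel[of 0] Lfix[of "L 0"] by simp
  have pre: "F -` {F u} = {u, L u, L (L u)}" for u
  proof
    show "{u, L u, L (L u)} \<subseteq> F -` {F u}" using Linv by auto
    show "F -` {F u} \<subseteq> {u, L u, L (L u)}"
    proof
      fix v assume "v \<in> F -` {F u}"
      then have Fv: "F v = F u" by simp
      show "v \<in> {u, L u, L (L u)}"
      proof (cases "v = u")
        case True then show ?thesis by simp
      next
        case False
        define a where "a = v - u"
        have a0: "a \<noteq> 0" using False unfolding a_def by simp
        have va: "v = u + a" unfolding a_def by simp
        define D where "D z = F(z+a) - F z - F a" for z
        have Du: "D u = - F a" unfolding D_def using Fv va by simp
        have "L a + a = L (L a)" by (rule Lrel)
        then have DLa: "D (L a) = - F a" unfolding D_def using Linv[of "L a"] Linv[of a] by simp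
        have "D u = D (u - L a) + D (L a)"
          using Badd[of "u - L a" "L a" a] unfolding D_def by simp
        then have "D (u - L a) = 0" using Du DLa by simp
        then have "u - L a = 0 \<or> u - L a = a" using ker[OF a0] unfolding D_def by blast
        then show ?thesis
        proof
          assume "u - L a = 0"
          then have u: "u = L a" by simp
          then have "v = L a + a" using va by simp
          then show ?thesis using u Lrel[of a] by simp
        next
          assume "u - L a = a"
          then have u: "u = L a + a" by (metis diff_add_cancel add.commute)
          then have u': "u = L (L a)" using Lrel by simp
          have "v = L a + a + a" using va u by simp
          also have "\<dots> = L a" using aa[of a] by (simp add: add.assoc)
          also have "\<dots> = L (L u)" using u' L3 by simp
          finally show ?thesis by simp
        qed
      qed
    qed
  qed
  have card_pre: "card (F -` {F u}) = (if u = 0 then 1 else 3)" for u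
  proof (cases "u = 0")
    case True then show ?thesis using pre L0 by simp
  next
    case False
    have d1: "L u \<noteq> u" using Lfix False by blast
    have d2: "L (L u) \<noteq> L u"
    proof
      assume "L (L u) = L u"
      then have "L u = 0" using Lfix by blast
      then have "L (L (L u)) = 0" using L0 by simp
      then show False using L3 False by simp
    qed
    have d3: "L (L u) \<noteq> u"
    proof
      assume "L (L u) = u"
      then have "L (L (L u)) = L u" by simp
      then show False using L3 d1 by simp
    qed
    show ?thesis using pre False d1 d2 d3 by (simp add: card_insert_if)
  qed
  show ?thesis unfolding almost_3_to_1_def
  proof (intro conjI ballI impI)
    show "\<exists>!y. y \<in> range F \<and> card (F -` {y}) = 1"
    proof (rule ex1I[of _ "F 0"])
      show "F 0 \<in> range F \<and> card (F -` {F 0}) = 1" using card_pre[of 0] by simp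
    next
      fix y assume "y \<in> range F \<and> card (F -` {y}) = 1"
      then obtain u where "y = F u" "card (F -` {F u}) = 1" by auto
      then show "y = F 0" using card_pre[of u] by (cases "u = 0") auto
    qed
  next
    fix y assume "y \<in> range F" "card (F -` {y}) \<noteq> 1"
    then obtain u where "y = F u" "card (F -` {F u}) \<noteq> 1" by auto
    then show "card (F -` {y}) = 3" using card_pre[of u] by (cases "u = 0") auto
  qed
qed


lemma rot_Q1:
  fixes sx sy x y :: "'a::field"
  assumes two: "(2::'a) = 0"
  shows "y*sy + y*(sx+sy) + (x+y)*(sx+sy) = x*sx + x*sy + y*sy"
proof -
  have "y*sy + y*(sx+sy) + (x+y)*(sx+sy) = x*sx + x*sy + y*sy + 2 * (sx*y + sy*y)" by algebra
  then show ?thesis using two  by simp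
qed

lemma rot_G1:
  fixes tx ty x y :: "'a::field"
  assumes two: "(2::'a) = 0"
  shows "y*ty + ty*(x+y) + (x+y)*(tx+ty) = x*tx + tx*y + y*ty"
proof -
  have "y*ty + ty*(x+y) + (x+y)*(tx+ty) = x*tx + tx*y + y*ty + 2 * (ty*x + ty*y)" by algebra
  then show ?thesis using two  by simp
qed

lemma rot_G2:
  fixes rx ry x y :: "'a::field"
  assumes two: "(2::'a) = 0"
  shows "ry*(x+y) + y*(rx+ry) = rx*y + x*ry"
proof -
  have "ry*(x+y) + y*(rx+ry) = rx*y + x*ry + 2 * (ry*y)" by algebra
  then show ?thesis using two  by simp
qed

lemma norm_B1:
  fixes c cq l lq s sq t tq w wq x xq y yq :: "'a::field"
  assumes two: "(2::'a) = 0"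
    and h: "x = l*s"
    and hq: "y = (w+l*c)*s"
    and hqq: "t = c*s"
    and hqqq: "xq = lq*sq"
    and hqqqq: "yq = (wq+lq*cq)*sq"
    and hqqqqq: "tq = cq*sq"
  shows "x*sq + s*xq + x*tq + s*yq + y*tq + t*yq = s*sq*((l+lq)*(1+cq+c*cq) + (1+c)*wq + w*cq)"
proof -
  have "(l*s)*sq + s*(lq*sq) + (l*s)*(cq*sq) + s*((wq+lq*cq)*sq) + ((w+l*c)*s)*(cq*sq) + (c*s)*((wq+lq*cq)*sq) = s*sq*((l+lq)*(1+cq+c*cq) + (1+c)*wq + w*cq) + 2 * 0" by algebra
  then show ?thesis using two h hq hqq hqqq hqqqq hqqqqq by simp
qed

lemma norm_B2a:
  fixes c cqq l lqq s sqq t tqq w wqq x xqq y yqq :: "'a::field"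
  assumes two: "(2::'a) = 0"
    and h: "x = l*s"
    and hq: "y = (w+l*c)*s"
    and hqq: "t = c*s"
    and hqqq: "xqq = lqq*sqq"
    and hqqqq: "yqq = (wqq+lqq*cqq)*sqq"
    and hqqqqq: "tqq = cqq*sqq"
  shows "x*sqq + s*xqq + xqq*t + sqq*y + y*tqq + t*yqq = s*sqq*((l+lqq)*(1+c+c*cqq) + w*(1+cqq) + c*wqq)"
proof -
  have "(l*s)*sqq + s*(lqq*sqq) + (lqq*sqq)*(c*s) + sqq*((w+l*c)*s) + ((w+l*c)*s)*(cqq*sqq) + (c*s)*((wqq+lqq*cqq)*sqq) = s*sqq*((l+lqq)*(1+c+c*cqq) + w*(1+cqq) + c*wqq) + 2 * 0" by algebra
  then show ?thesis using two h hq hqq hqqq hqqqq hqqqqq by simp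
qed

lemma norm_B2b:
  fixes c cqqq l lqqq s sqqq t tqqq w wqqq x xqqq y yqqq :: "'a::field"
  assumes two: "(2::'a) = 0"
    and h: "x = l*s"
    and hq: "y = (w+l*c)*s"
    and hqq: "t = c*s"
    and hqqq: "xqqq = lqqq*sqqq"
    and hqqqq: "yqqq = (wqqq+lqqq*cqqq)*sqqq"
    and hqqqqq: "tqqq = cqqq*sqqq"
  shows "xqqq*t + sqqq*y + x*tqqq + s*yqqq = s*sqqq*((l+lqqq)*(c+cqqq) + w + wqqq)"
proof -
  have "(lqqq*sqqq)*(c*s) + sqqq*((w+l*c)*s) + (l*s)*(cqqq*sqqq) + s*((wqqq+lqqq*cqqq)*sqqq) = s*sqqq*((l+lqqq)*(c+cqqq) + w + wqqq) + 2 * 0" by algebra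
  then show ?thesis using two h hq hqq hqqq hqqqq hqqqqq by simp
qed

lemma f1_ell:
  fixes c cq cqq l lq lqq w wq wqq :: "'a::field"
  assumes two: "(2::'a) = 0"
  shows "((1+cqq+cq*cqq)^2*w + (1+c+c*cqq)^2*wq + (1+cq+c*cq)^2*wqq) = (1+cqq+cq*cqq)*(1+cq+c*cq)*((l+lqq)*(1+c+c*cqq) + w*(1+cqq) + c*wqq) + (1+c+c*cqq)*(1+cqq+cq*cqq)*((l+lq)*(1+cq+c*cq) + (1+c)*wq + w*cq) + (1+c+c*cqq)*(1+cq+c*cq)*((lq+lqq)*(1+cqq+cq*cqq) + (1+cq)*wqq + wq*cqq)"
proof -
  have "((1+cqq+cq*cqq)^2*w + (1+c+c*cqq)^2*wq + (1+cq+c*cq)^2*wqq) = (1+cqq+cq*cqq)*(1+cq+c*cq)*((l+lqq)*(1+c+c*cqq) + w*(1+cqq) + c*wqq) + (1+c+c*cqq)*(1+cqq+cq*cqq)*((l+lq)*(1+cq+c*cq) + (1+c)*wq + w*cq) + (1+c+c*cqq)*(1+cq+c*cq)*((lq+lqq)*(1+cqq+cq*cqq) + (1+cq)*wqq + wq*cqq) + 2 * (-4*c*cq*cqq*l - 4*c*cq*cqq*lq - 4*c*cq*cqq*lqq - 2*c*cq*cqq*w - 2*c*cq*cqq*wq - 2*c*cq*cqq*wqq - 2*c*cq*cqq^2*l - 2*c*cq*cqq^2*lq - 2*c*cq*cqq^2*lqq - c*cq*cqq^2*w - c*cq*cqq^2*wq - 2*c*cq*l - 2*c*cq*lq - 2*c*cq*lqq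 - c*cq*w - c*cq*wqq - 2*c*cq^2*cqq*l - 2*c*cq^2*cqq*lq - 2*c*cq^2*cqq*lqq - c*cq^2*cqq*w - c*cq^2*cqq*wqq - c*cq^2*cqq^2*l - c*cq^2*cqq^2*lq - c*cq^2*cqq^2*lqq - c*cq^2*cqq^2*w - 2*c*cqq*l - 2*c*cqq*lq - 2*c*cqq*lqq - c*cqq*wq - c*cqq*wqq - c*cqq^2*l - c*cqq^2*lq - c*cqq^2*lqq - c*cqq^2*wq - c*l - c*lq - c*lqq - c*wqq - 2*c^2*cq*cqq*l - 2*c^2*cq*cqq*lq - 2*c^2*cq*cqq*lqq - c^2*cq*cqq*wq - c^2*cq*cqq*wqq - c^2*cq*cqq^2*l - c^2*cq*cqq^2*lq - c^2*cq*cqq^2*lqq - c^2*cq*cqq^2*wq - c^2*cq*l - c^2*cq*lq - c^2*cq*lqq - c^2*cq*wqq - c^2*cq^2*cqq*l - c^2*cq^2*cqq*lq - c^2*cq^2*cqq*lqq - c^2*cq^2*cqq*wqq - c^2*cq^2*cqq^2*l - c^2*cq^2*cqq^2*lq - c^2*cq^2*cqq^2*lqq - 2*cq*cqq*l - 2*cq*cqq*lq - 2*cq*cqq*lqq - cq*cqq*w - cq*cqq*wq - cq*l - cq*lq - cq*lqq - cq*w - cq^2*cqq*l - cq^2*cqq*lq - cq^2*cqq*lqq - cq^2*cqq*w - cqq*l - cqq*lq - cqq*lqq - cqq*wq - l - lq - lqq)" by algebra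
  then show ?thesis using two  by simp
qed

lemma f1_R1:
  fixes c cq cqq w wq wqq :: "'a::field"
  assumes two: "(2::'a) = 0"
  shows "(1+cq+c*cq)^2*((wqq + cq^2*wqq + wq)+(cq^2*wqq + cqq^2*wq + wq)) = (1+cqq+cq*cqq)^2*(wq + c^2*wq + w) + (1)*((1+cqq+cq*cqq)^2*w + (1+c+c*cqq)^2*wq + (1+cq+c*cq)^2*wqq)"
proof -
  have "(1+cq+c*cq)^2*((wqq + cq^2*wqq + wq)+(cq^2*wqq + cqq^2*wq + wq)) = (1+cqq+cq*cqq)^2*(wq + c^2*wq + w) + (1)*((1+cqq+cq*cqq)^2*w + (1+c+c*cqq)^2*wq + (1+cq+c*cq)^2*wqq) + 2 * (c*cq*cqq^2*wq + 2*c*cq*wq + c*cq^2*cqq^2*wq + 2*c*cq^2*wq + 2*c*cq^3*wqq + 2*c*cq^4*wqq - c*cqq*wq - c*wq - c^2*cq*cqq*wq - c^2*cq*cqq^2*wq + c^2*cq^2*wq + c^2*cq^4*wqq - 2*c^2*cqq*wq - c^2*cqq^2*wq - c^2*wq - 2*cq*cqq*w - cq*cqq*wq - 2*cq*cqq^2*w + 2*cq*wq - cq^2*cqq^2*w + cq^2*wq + cq^2*wqq + 2*cq^3*wqq + cq^4*wqq - 2*cqq*w - cqq*wq - cqq^2*w - w)" by algebra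
  then show ?thesis using two  by simp
qed

lemma f1_R2:
  fixes c cq cqq w wq wqq :: "'a::field"
  assumes two: "(2::'a) = 0"
  shows "(1+cq+c*cq)^2*(wqq + cq^2*wqq + wq) = (1+cqq+cq*cqq)^2*(c^2*wq + cq^2*w + w) + (1 + cq^2)*((1+cqq+cq*cqq)^2*w + (1+c+c*cqq)^2*wq + (1+cq+c*cq)^2*wqq)"
proof -
  have "(1+cq+c*cq)^2*(wqq + cq^2*wqq + wq) = (1+cqq+cq*cqq)^2*(c^2*wq + cq^2*w + w) + (1 + cq^2)*((1+cqq+cq*cqq)^2*w + (1+c+c*cqq)^2*wq + (1+cq+c*cq)^2*wqq) + 2 * (c*cq*wq - c*cq^2*cqq*wq - c*cqq*wq - c*wq - c^2*cq*cqq*wq - c^2*cq*cqq^2*wq - c^2*cq^2*cqq*wq - c^2*cq^2*cqq^2*wq - 2*c^2*cqq*wq - c^2*cqq^2*wq - c^2*wq - 2*cq*cqq*w - 2*cq*cqq^2*w + cq*wq - 2*cq^2*cqq*w - 2*cq^2*cqq^2*w - cq^2*w - 2*cq^3*cqq*w - 2*cq^3*cqq^2*w - cq^4*cqq^2*w - 2*cqq*w - cqq^2*w - w)" by algebra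
  then show ?thesis using two  by simp
qed

lemma f1_fin:
  fixes c cq w wq :: "'a::field"
  assumes two: "(2::'a) = 0"
  shows "(c^2*wq + cq^2*w + w) + (1+cq^2)*(wq + c^2*wq + w) = wq*(1+cq+c*cq)^2"
proof -
  have "(c^2*wq + cq^2*w + w) + (1+cq^2)*(wq + c^2*wq + w) = wq*(1+cq+c*cq)^2 + 2 * (-c*cq*wq - c*cq^2*wq + c^2*wq - cq*wq + cq^2*w + w)" by algebra
  then show ?thesis using two  by simp
qed


lemma f2_I1:
  fixes c cq cqq cqqq l lq lqq lqqq w wq wqq wqqq :: "'a::field"
  assumes two: "(2::'a) = 0"
  shows "(1+cq+cq^2)*(1+cqq+cqq^2)*((l+lqqq)*(c+cqqq) + w + wqqq) = (cq + cq*cqq + cq*cqq^2 + cqq*cqqq + cqq^2*cqqq + cqqq)*((l+lq)*(1+cq+c*cq) + (1+c)*wq + w*cq) + (c + c*cq + c*cq*cqq + c*cq*cqqq + c*cqq*cqqq + cq + cq*cqq*cqqq + cqq + cqq*cqqq + cqqq)*((lq+lqq)*(1+cqq+cq*cqq) + (1+cq)*wqq + wq*cqq) + (c + c*cq + c*cq^2 + cq*cqq + cq^2*cqq + cqq)*((lqq+lqqq)*(1+cqqq+cqq*cqqq) + (1+cqq)*wqqq + wqq*cqqq) + (1 + cq + cq*cqq + cq*cqq*cqqq + cq*cqq^2 + cq*cqq^2*cqqq + cq*cqqq + cqq + cqq^2)*((l+lq)*(c+cq) + w + wq) + (1 + c*cq + c*cq*cqq*cqqq + c*cqq + c*cqq*cqqq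 + c*cqqq + cq*cqq + cq*cqq*cqqq + cq*cqqq + cqq + cqqq)*((lq+lqq)*(cq+cqq) + wq + wqq) + (1 + c + c*cq + c*cq*cqq + c*cq^2 + c*cq^2*cqq + c*cqq + cq + cq^2)*((lqq+lqqq)*(cqq+cqqq) + wqq + wqqq)"
proof -
  have "(1+cq+cq^2)*(1+cqq+cqq^2)*((l+lqqq)*(c+cqqq) + w + wqqq) = (cq + cq*cqq + cq*cqq^2 + cqq*cqqq + cqq^2*cqqq + cqqq)*((l+lq)*(1+cq+c*cq) + (1+c)*wq + w*cq) + (c + c*cq + c*cq*cqq + c*cq*cqqq + c*cqq*cqqq + cq + cq*cqq*cqqq + cqq + cqq*cqqq + cqqq)*((lq+lqq)*(1+cqq+cq*cqq) + (1+cq)*wqq + wq*cqq) + (c + c*cq + c*cq^2 + cq*cqq + cq^2*cqq + cqq)*((lqq+lqqq)*(1+cqqq+cqq*cqqq) + (1+cqq)*wqqq + wqq*cqqq) + (1 + cq + cq*cqq + cq*cqq*cqqq + cq*cqq^2 + cq*cqq^2*cqqq + cq*cqqq + cqq + cqq^2)*((l+lq)*(c+cq) + w + wq) + (1 + c*cq + c*cq*cqq*cqqq + c*cqq + c*cqq*cqqq + c*cqqq + cq*cqq + cq*cqq*cqqq + cq*cqqq + cqq + cqqq)*((lq+lqq)*(cq+cqq) + wq + wqq) + (1 + c + c*cq + c*cq*cqq + c*cq^2 + c*cq^2*cqq + c*cqq + cq + cq^2)*((lqq+lqqq)*(cqq+cqqq) + wqq + wqqq) + 2 * (-c*cq*cqq*cqqq*l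 - 2*c*cq*cqq*cqqq*lq - 2*c*cq*cqq*cqqq*lqq - c*cq*cqq*cqqq*lqqq - c*cq*cqq*cqqq*wq - c*cq*cqq*cqqq*wqq - 3*c*cq*cqq*lq - 3*c*cq*cqq*lqq - c*cq*cqq*wq - c*cq*cqq*wqq - c*cq*cqq*wqqq - c*cq*cqq^2*cqqq*l - 2*c*cq*cqq^2*cqqq*lq - c*cq*cqq^2*cqqq*lqq - c*cq*cqq^2*lq - c*cq*cqq^2*lqq - c*cq*cqq^2*wq - c*cq*cqqq*l - 2*c*cq*cqqq*lq - 2*c*cq*cqqq*lqq - c*cq*cqqq*lqqq - c*cq*cqqq*wqq - c*cq*lq - c*cq*lqq - c*cq*wq - 2*c*cq*wqq - c*cq*wqqq - c*cq^2*cqq*cqqq*lq - 2*c*cq^2*cqq*cqqq*lqq - c*cq^2*cqq*cqqq*lqqq - c*cq^2*cqq*lq - c*cq^2*cqq*lqq - c*cq^2*cqq*wqq - c*cq^2*cqq*wqqq - c*cq^2*cqq^2*lq - c*cq^2*cqq^2*lqq - c*cq^2*cqqq*lqq - c*cq^2*cqqq*lqqq - c*cq^2*cqqq*wqq - c*cq^2*lq - c*cq^2*lqq - c*cq^2*wqq - c*cq^2*wqqq - c*cqq*cqqq*lq - 2*c*cqq*cqqq*lqq - c*cqq*cqqq*lqqq - c*cqq*cqqq*wq - c*cqq*cqqq*wqq - c*cqq*lq - c*cqq*lqq - c*cqq*wq - c*cqq*wqq - c*cqq*wqqq - c*cqq^2*cqqq*lq - c*cqq^2*cqqq*lqq - c*cqq^2*cqqq*wq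 - c*cqq^2*lq - c*cqq^2*lqq - c*cqqq*lqq - c*cqqq*lqqq - c*cqqq*wq - c*cqqq*wqq - c*lq - c*lqq - c*wqq - c*wqqq - 2*cq*cqq*cqqq*lq - 2*cq*cqq*cqqq*lqq - cq*cqq*cqqq*w - cq*cqq*cqqq*wq - 2*cq*cqq*cqqq*wqq - cq*cqq*l - 2*cq*cqq*lq - 2*cq*cqq*lqq - cq*cqq*lqqq - 2*cq*cqq*wq - cq*cqq*wqq - 2*cq*cqq^2*cqqq*lq - 2*cq*cqq^2*cqqq*lqq - cq*cqq^2*cqqq*w - cq*cqq^2*cqqq*wq - cq*cqq^2*l - 2*cq*cqq^2*lq - cq*cqq^2*lqq - cq*cqq^2*wq - cq*cqqq*lq - cq*cqqq*lqq - cq*cqqq*w - cq*cqqq*wq - cq*cqqq*wqq - cq*l - 2*cq*lq - cq*lqq - cq*wq - cq*wqq - cq^2*cqq*cqqq*lq - cq^2*cqq*cqqq*lqq - cq^2*cqq*cqqq*wqq - cq^2*cqq*l - 2*cq^2*cqq*lq - 2*cq^2*cqq*lqq - cq^2*cqq*lqqq - cq^2*cqq^2*cqqq*lq - cq^2*cqq^2*cqqq*lqq - cq^2*cqq^2*l - cq^2*cqq^2*lq - cq^2*cqqq*lq - cq^2*cqqq*lqq - cq^2*l - cq^2*lq - cq^2*wqq - 2*cqq*cqqq*lq - 2*cqq*cqqq*lqq - cqq*cqqq*wq - cqq*cqqq*wqq - cqq*lq - 2*cqq*lqq - cqq*lqqq - cqq*wq - cqq*wqq - cqq^2*cqqq*lq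 - cqq^2*cqqq*lqq - cqq^2*cqqq*wq - cqq^2*lq - cqq^2*lqq - cqq^2*wq - cqqq*lq - cqqq*lqq - cqqq*wq - cqqq*wqq - wq - wqq)" by algebra
  then show ?thesis using two  by simp
qed

lemma f2_Rz1:
  fixes c cq cqq cqqq r rq rqq :: "'a::field"
  assumes two: "(2::'a) = 0"
  shows "((1+c+c*cqq)*(1+cq+cq^2))*(cq*cqq*rqq + cqq*rq + cqqq*rq + rq + rqq) + ((1+cq+cq*cqqq)*(1+cqq+cqq^2))*(c*cq*rq + c*rq + cq*cqq*r + cq*rq + r) = (1 + cq*cqq)*((1 + cq + cq*cqq + cq*cqq*cqqq + cq*cqq^2 + cq*cqq^2*cqqq + cq*cqqq + cqq + cqq^2)*r + (1 + c*cq + c*cq*cqq*cqqq + c*cqq + c*cqq*cqqq + c*cqqq + cq*cqq + cq*cqq*cqqq + cq*cqqq + cqq + cqqq)*rq + (1 + c + c*cq + c*cq*cqq + c*cq^2 + c*cq^2*cqq + c*cqq + cq + cq^2)*rqq)"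
proof -
  have "((1+c+c*cqq)*(1+cq+cq^2))*(cq*cqq*rqq + cqq*rq + cqqq*rq + rq + rqq) + ((1+cq+cq*cqqq)*(1+cqq+cqq^2))*(c*cq*rq + c*rq + cq*cqq*r + cq*rq + r) = (1 + cq*cqq)*((1 + cq + cq*cqq + cq*cqq*cqqq + cq*cqq^2 + cq*cqq^2*cqqq + cq*cqqq + cqq + cqq^2)*r + (1 + c*cq + c*cq*cqq*cqqq + c*cqq + c*cqq*cqqq + c*cqqq + cq*cqq + cq*cqq*cqqq + cq*cqqq + cqq + cqqq)*rq + (1 + c + c*cq + c*cq*cqq + c*cq^2 + c*cq^2*cqq + c*cqq + cq + cq^2)*rqq) + 2 * (2*c*cq*cqq*rq + c*cq*cqq^2*rq + c*cq*cqqq*rq + c*cq*rq + c*cq^2*cqq*cqqq*rq + c*cq^2*cqq*rq + c*cq^2*cqq^2*rq + c*cq^2*cqqq*rq + c*cq^2*rq + c*cqq*rq + c*cqq^2*rq + c*rq - cq*cqq*cqqq*rq + cq*rq + cq^2*cqq*rq + cq^2*cqqq*rq + cq^2*rq)" by algebra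
  then show ?thesis using two  by simp
qed

lemma f2_Rz2:
  fixes c cq cqq cqqq r rq rqq :: "'a::field"
  assumes two: "(2::'a) = 0"
  shows "((1+c+c*cqq)*(1+cq+cq^2))*(cq*cqq*rqq + cq*rqq + cqq*cqqq*rq + cqq*rqq + rq) + ((1+cq+cq*cqqq)*(1+cqq+cqq^2))*((c*cq*rq + cq*r + cqq*r + r + rq)+(c*cq*rq + c*rq + cq*cqq*r + cq*rq + r)) = (cq + cq*cqq + cqq)*((1 + cq + cq*cqq + cq*cqq*cqqq + cq*cqq^2 + cq*cqq^2*cqqq + cq*cqqq + cqq + cqq^2)*r + (1 + c*cq + c*cq*cqq*cqqq + c*cqq + c*cqq*cqqq + c*cqqq + cq*cqq + cq*cqq*cqqq + cq*cqqq + cqq + cqqq)*rq + (1 + c + c*cq + c*cq*cqq + c*cq^2 + c*cq^2*cqq + c*cqq + cq + cq^2)*rqq)"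
proof -
  have "((1+c+c*cqq)*(1+cq+cq^2))*(cq*cqq*rqq + cq*rqq + cqq*cqqq*rq + cqq*rqq + rq) + ((1+cq+cq*cqqq)*(1+cqq+cqq^2))*((c*cq*rq + cq*r + cqq*r + r + rq)+(c*cq*rq + c*rq + cq*cqq*r + cq*rq + r)) = (cq + cq*cqq + cqq)*((1 + cq + cq*cqq + cq*cqq*cqqq + cq*cqq^2 + cq*cqq^2*cqqq + cq*cqqq + cqq + cqq^2)*r + (1 + c*cq + c*cq*cqq*cqqq + c*cqq + c*cqq*cqqq + c*cqqq + cq*cqq + cq*cqq*cqqq + cq*cqqq + cqq + cqqq)*rq + (1 + c + c*cq + c*cq*cqq + c*cq^2 + c*cq^2*cqq + c*cqq + cq + cq^2)*rqq) + 2 * (c*cq*cqq*rq + c*cq*cqq^2*rq + 2*c*cq*rq + c*cq^2*cqq*cqqq*rq + c*cq^2*cqq*rq + c*cq^2*cqq^2*cqqq*rq + c*cq^2*cqq^2*rq + c*cq^2*cqqq*rq + c*cq^2*rq + c*cqq*rq + c*rq + cq*cqq*cqqq*r + cq*cqq*r + cq*cqq^2*cqqq*r + cq*cqq^2*r + cq*cqqq*r + cq*r + cq*rq + cq^2*rq + cqq*r + cqq^2*r + r + rq)" by algebra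
  then show ?thesis using two  by simp
qed

lemma f2_Zfin:
  fixes c cq cqq r rq :: "'a::field"
  assumes two: "(2::'a) = 0"
  shows "(1+c+c*cqq)*(1+cq+cq^2)*r = c*((1+cq)*(c*cq*rq + cq*r + cqq*r + r + rq) + cq*(c*cq*rq + c*rq + cq*cqq*r + cq*rq + r)) + cq*(c*cq*rq + cq*r + cqq*r + r + rq) + (c*cq*rq + c*rq + cq*cqq*r + cq*rq + r)"
proof -
  have "(1+c+c*cqq)*(1+cq+cq^2)*r = c*((1+cq)*(c*cq*rq + cq*r + cqq*r + r + rq) + cq*(c*cq*rq + c*rq + cq*cqq*r + cq*rq + r)) + cq*(c*cq*rq + cq*r + cqq*r + r + rq) + (c*cq*rq + c*rq + cq*cqq*r + cq*rq + r) + 2 * (-c*cq*r - c*cq*rq - c*cq^2*rq - c*rq - c^2*cq*rq - c^2*cq^2*rq - cq*cqq*r - cq*rq)" by algebra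
  then show ?thesis using two  by simp
qed

lemma f2_I3x:
  fixes c cq cqq l lq lqq w wq wqq :: "'a::field"
  assumes two: "(2::'a) = 0"
  shows "(1+cq+cq^2)*((1+c+c^2)*(lqq*(1+cqq+cqq^2) + wqq*cqq) + (1+cqq+cqq^2)*(l*(1+c+c^2) + w*c)) = (1 + c + c*cq + c*cq*cqq + c*cq*cqq^2 + c*cqq + c*cqq^2 + cqq + cqq^2)*((l+lq)*(1+cq+c*cq) + (1+c)*wq + w*cq) + (c + c*cqq + c*cqq^2 + cq + cq*cqq + cq*cqq^2)*((l+lq)*(c+cq) + w + wq) + (1 + c + c*cq*cqq + c*cqq + c^2 + c^2*cq*cqq + c^2*cqq + cq*cqq + cqq)*((lq+lqq)*(1+cqq+cq*cqq) + (1+cq)*wqq + wq*cqq) + (1 + c + c*cq + c*cq*cqq + c^2 + c^2*cq + c^2*cq*cqq + cq + cq*cqq)*((lq+lqq)*(cq+cqq) + wq + wqq)"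
proof -
  have "(1+cq+cq^2)*((1+c+c^2)*(lqq*(1+cqq+cqq^2) + wqq*cqq) + (1+cqq+cqq^2)*(l*(1+c+c^2) + w*c)) = (1 + c + c*cq + c*cq*cqq + c*cq*cqq^2 + c*cqq + c*cqq^2 + cqq + cqq^2)*((l+lq)*(1+cq+c*cq) + (1+c)*wq + w*cq) + (c + c*cqq + c*cqq^2 + cq + cq*cqq + cq*cqq^2)*((l+lq)*(c+cq) + w + wq) + (1 + c + c*cq*cqq + c*cqq + c^2 + c^2*cq*cqq + c^2*cqq + cq*cqq + cqq)*((lq+lqq)*(1+cqq+cq*cqq) + (1+cq)*wqq + wq*cqq) + (1 + c + c*cq + c*cq*cqq + c^2 + c^2*cq + c^2*cq*cqq + cq + cq*cqq)*((lq+lqq)*(cq+cqq) + wq + wqq) + 2 * (-2*c*cq*cqq*l - 4*c*cq*cqq*lq - c*cq*cqq*lqq - c*cq*cqq*wq - c*cq*cqq*wqq - 2*c*cq*cqq^2*l - 4*c*cq*cqq^2*lq - c*cq*cqq^2*lqq - c*cq*cqq^2*wq - 2*c*cq*l - 3*c*cq*lq - c*cq*wq - c*cq*wqq - c*cq^2*cqq*lq - c*cq^2*cqq^2*lq - c*cq^2*lq - 2*c*cqq*lq - c*cqq*lqq - 2*c*cqq*wq - c*cqq^2*lq - 2*c*cqq^2*wq - c*lq - 2*c*wq - c*wqq - 2*c^2*cq*cqq*lq - c^2*cq*cqq*lqq - c^2*cq*cqq*wq - c^2*cq*cqq*wqq - 2*c^2*cq*cqq^2*lq - c^2*cq*cqq^2*lqq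 - c^2*cq*cqq^2*wq - c^2*cq*lq - c^2*cq*wq - c^2*cq*wqq - c^2*cq^2*cqq*lq - c^2*cq^2*cqq^2*lq - c^2*cq^2*lq - 2*c^2*cqq*lq - c^2*cqq*lqq - c^2*cqq*wq - c^2*cqq^2*lq - c^2*cqq^2*wq - c^2*lq - c^2*wq - c^2*wqq - 2*cq*cqq*lq - cq*cqq*lqq - cq*cqq*w - cq*cqq*wq - cq*cqq*wqq - 2*cq*cqq^2*lq - cq*cqq^2*lqq - cq*cqq^2*w - cq*cqq^2*wq - cq*lq - cq*w - cq*wq - cq*wqq - cq^2*cqq*lq - cq^2*cqq^2*lq - cq^2*lq - 2*cqq*lq - cqq*lqq - cqq*wq - cqq^2*lq - cqq^2*wq - lq - wq - wqq)" by algebra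
  then show ?thesis using two  by simp
qed

lemma f2_I3y:
  fixes c cq cqq l lq lqq w wq wqq :: "'a::field"
  assumes two: "(2::'a) = 0"
  shows "(1+cq+cq^2)*((1+c+c^2)*wqq + (1+cqq+cqq^2)*w) = (c + c*cqq + c*cqq^2 + cq + cq*cqq + cq*cqq^2)*((l+lq)*(1+cq+c*cq) + (1+c)*wq + w*cq) + (1 + c*cq + c*cq*cqq + c*cq*cqq^2 + cq + cq*cqq + cq*cqq^2 + cqq + cqq^2)*((l+lq)*(c+cq) + w + wq) + (c*cq + c*cqq + c^2*cq + c^2*cqq + cq + cqq)*((lq+lqq)*(1+cqq+cq*cqq) + (1+cq)*wqq + wq*cqq) + (1 + c + c*cq*cqq + c*cqq + c^2 + c^2*cq*cqq + c^2*cqq + cq*cqq + cqq)*((lq+lqq)*(cq+cqq) + wq + wqq)"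
proof -
  have "(1+cq+cq^2)*((1+c+c^2)*wqq + (1+cqq+cqq^2)*w) = (c + c*cqq + c*cqq^2 + cq + cq*cqq + cq*cqq^2)*((l+lq)*(1+cq+c*cq) + (1+c)*wq + w*cq) + (1 + c*cq + c*cq*cqq + c*cq*cqq^2 + cq + cq*cqq + cq*cqq^2 + cqq + cqq^2)*((l+lq)*(c+cq) + w + wq) + (c*cq + c*cqq + c^2*cq + c^2*cqq + cq + cqq)*((lq+lqq)*(1+cqq+cq*cqq) + (1+cq)*wqq + wq*cqq) + (1 + c + c*cq*cqq + c*cqq + c^2 + c^2*cq*cqq + c^2*cqq + cq*cqq + cqq)*((lq+lqq)*(cq+cqq) + wq + wqq) + 2 * (-c*cq*cqq*l - 2*c*cq*cqq*lq - c*cq*cqq*lqq - c*cq*cqq*w - 2*c*cq*cqq*wq - c*cq*cqq*wqq - c*cq*cqq^2*l - 2*c*cq*cqq^2*lq - c*cq*cqq^2*lqq - c*cq*cqq^2*w - c*cq*cqq^2*wq - c*cq*l - 2*c*cq*lq - c*cq*lqq - c*cq*w - c*cq*wq - c*cq^2*cqq*l - 2*c*cq^2*cqq*lq - c*cq^2*cqq*lqq - c*cq^2*cqq^2*l - c*cq^2*cqq^2*lq - c*cq^2*l - c*cq^2*lq - c*cqq*l - 2*c*cqq*lq - c*cqq*lqq - c*cqq*wq - c*cqq*wqq - c*cqq^2*l - 2*c*cqq^2*lq - c*cqq^2*lqq - c*cqq^2*wq - c*l - c*lq - c*wq - c^2*cq*cqq*l - 2*c^2*cq*cqq*lq - c^2*cq*cqq*lqq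 - c^2*cq*cqq*wq - c^2*cq*cqq*wqq - c^2*cq*cqq^2*l - 2*c^2*cq*cqq^2*lq - c^2*cq*cqq^2*lqq - c^2*cq*l - 2*c^2*cq*lq - c^2*cq*lqq - c^2*cq^2*cqq*lq - c^2*cq^2*cqq*lqq - c^2*cqq*lq - c^2*cqq*lqq - c^2*cqq*wq - c^2*cqq*wqq - c^2*cqq^2*lq - c^2*cqq^2*lqq - c^2*cqq^2*wq - c^2*wq - cq*cqq*l - 2*cq*cqq*lq - cq*cqq*lqq - 2*cq*cqq*wq - cq*cqq*wqq - cq*cqq^2*l - 2*cq*cqq^2*lq - cq*cqq^2*lqq - cq*cqq^2*wq - cq*l - 2*cq*lq - cq*lqq - cq*wq - cq^2*cqq*l - 2*cq^2*cqq*lq - cq^2*cqq*lqq - cq^2*cqq^2*l - cq^2*cqq^2*lq - cq^2*l - cq^2*lq - cqq*lq - cqq*lqq - cqq*wq - cqq*wqq - cqq^2*lq - cqq^2*lqq - cqq^2*wq - wq)" by algebra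
  then show ?thesis using two  by simp
qed

lemma f2_fin:
  fixes c cq l lq p q w wq :: "'a::field"
  assumes two: "(2::'a) = 0"
    and h: "l = p+q*c"
    and hq: "w = q*(1+c+c^2)"
    and hqq: "lq = p+q*cq"
    and hqqq: "wq = q*(1+cq+cq^2)"
  shows "((l+lq)*(1+cq+c*cq) + (1+c)*wq + w*cq) = q*(1+cq+c*cq)"
proof -
  have "(((p+q*c)+(p+q*cq))*(1+cq+c*cq) + (1+c)*(q*(1+cq+cq^2)) + (q*(1+c+c^2))*cq) = q*(1+cq+c*cq) + 2 * (c*cq*p + c*cq*q + c*cq^2*q + c*q + c^2*cq*q + cq*p + cq*q + cq^2*q + p)" by algebra
  then show ?thesis using two h hq hqq hqqq by simp
qed

lemma nd1_cert:
  fixes c cqq cqqq :: "'a::field"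
  assumes two: "(2::'a) = 0"
  shows "cqqq + c = c*(1+cqqq+cqq*cqqq) + cqqq*(c*cqq + 1 + c)"
proof -
  have "cqqq + c = c*(1+cqqq+cqq*cqqq) + cqqq*(c*cqq + 1 + c) + 2 * (-c*cqq*cqqq - c*cqqq)" by algebra
  then show ?thesis using two  by simp
qed

lemma nd1_a:
  fixes c cq cqq :: "'a::field"
  assumes two: "(2::'a) = 0"
  shows "c*cqq = (1+c)*(1+(1+cqq+cq*cqq)) + cqq*(1+cq+c*cq)"
proof -
  have "c*cqq = (1+c)*(1+(1+cqq+cq*cqq)) + cqq*(1+cq+c*cq) + 2 * (-1 - c - c*cq*cqq - cq*cqq - cqq)" by algebra
  then show ?thesis using two  by simp
qed

lemma nd2_cert:
  fixes x xq xqq xqqq :: "'a::field"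
  assumes two: "(2::'a) = 0"
  shows "xqqq + x = (1+x)*(1+xqq+xqq*xqqq) + (1+xqqq)*(x*(1+xq+xq*xqq) + xqq*(1+x+x*xq) + (1+x+x*xq))"
proof -
  have "xqqq + x = (1+x)*(1+xqq+xqq*xqqq) + (1+xqqq)*(x*(1+xq+xq*xqq) + xqq*(1+x+x*xq) + (1+x+x*xq)) + 2 * (-1 - x - x*xq - x*xq*xqq - x*xq*xqq*xqqq - x*xq*xqqq - x*xqq - x*xqq*xqqq - x*xqqq - xqq - xqq*xqqq)" by algebra
  then show ?thesis using two  by simp
qed



definition rot :: "'a::field \<times> 'a \<Rightarrow> 'a \<times> 'a" where "rot z = (snd z, fst z + snd z)"

lemma pw1: "(x::'a::field)^(2^k+1) = x * sg k x" by (simp add: sg_def power_add mult.commute)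
lemma pw2: "(x::'a::field)^(2^(2*k)+1) = x * sg k (sg k x)" by (simp add: sg_sg power_add mult.commute)
lemma pw2': "(x::'a::field)^(2^(2*k)) = sg k (sg k x)" by (simp add: sg_sg)
lemma pw3': "(x::'a::field)^(2^(3*k)) = sg k (sg k (sg k x))" by (simp add: sg_sg_sg)
lemma pw1': "(x::'a::field)^(2^k) = sg k x" by (simp add: sg_def)

lemma f1_sg: "f1 k (x,y) = (x*sg k x + x*sg k y + y*sg k y, x*sg k (sg k x) + sg k (sg k x)*y + y*sg k (sg k y))"
  unfolding f1_def by (simp only: pw1[of _ k] pw2 pw2' pw1'[of _ k] prod.case)

lemma f2_sg: "f2 k (x,y) = (x*sg k x + x*sg k y + y*sg k y, sg k (sg k (sg k x))*y + x*sg k (sg k (sg k y)))"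
  unfolding f2_def by (simp only: pw1[of _ k] pw3' pw1'[of _ k] prod.case)

lemma c2a: fixes a b :: "'a::field" assumes two: "(2::'a) = 0" shows "b + (a + b) = a"
proof -
  have "b + (a + b) = a + 2*b" by (simp add: mult_2 ac_simps)
  then show ?thesis using two by simp
qed
lemma c2c: fixes a b :: "'a::field" assumes two: "(2::'a) = 0" shows "(a + b) + a = b"
proof -
  have "(a + b) + a = b + 2*a" by (simp add: mult_2 ac_simps)
  then show ?thesis using two by simp
qed
lemma c2d: fixes a b :: "'a::field" assumes two: "(2::'a) = 0" shows "(a + b) + b = a"
proof -
  have "(a + b) + b = a + 2*b" by (simp add: mult_2 ac_simps)
  then show ?thesis using two by simp
qed

lemma fr1: fixes a b d e x :: "'a::field" assumes "d \<noteq> 0" "e \<noteq> 0" "d*(a+b) = e*x" shows "a/e + b/e = x/d"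
  using assms by (simp add: add_divide_distrib[symmetric] frac_eq_eq mult.commute)
lemma fr2: fixes a d e y :: "'a::field" assumes "d \<noteq> 0" "e \<noteq> 0" "d*a = e*y" shows "a/e = y/d"
  using assms by (simp add: frac_eq_eq mult.commute)

context
  fixes m k :: nat
  assumes card: "card (UNIV::'a::{field,finite} set) = 2^m" and mpos: "m > 0"
    and g3: "gcd (3*k) m = 1"
begin

lemma two: "(2::'a) = 0" using char2_of_card[OF card mpos] .

lemmas SG = sg_add[OF two] sg_mult[OF two] sg_1[OF two] sg_0[OF two] sg_pow[OF two] sg_div[OF two] sg_eq0[OF two]

lemma gk: "gcd k m = 1"
proof -
  have "coprime (3*k) m" using g3 by (simp add: coprime_iff_gcd_eq_1)
  then have "coprime k m" by simp
  then show ?thesis by (simp add: coprime_iff_gcd_eq_1)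
qed

lemma fix1: "sg k (x::'a) = x \<Longrightarrow> x = 0 \<or> x = 1"
  using fixed_F2[OF card gk] unfolding sg_def by blast

lemma fix3: "sg k (sg k (sg k (x::'a))) = x \<Longrightarrow> x = 0 \<or> x = 1"
  using fixed_F2[OF card g3] unfolding sg_sg_sg by blast

lemma addeq: "(a::'a) + b = 0 \<longleftrightarrow> a = b"
  using neg_char2[OF two] by (metis add_eq_0_iff)

lemma Tlem: assumes "sg k (sg k (t::'a)) = t + sg k t" shows "t = 0 \<or> t = 1"
proof -
  have "sg k (sg k (sg k t)) = sg k t + sg k (sg k t)" using assms SG by simp
  also have "\<dots> = t" using assms add_self_char2[OF two, of "sg k t"] by (simp add: algebra_simps)
  finally show ?thesis by (rule fix3)
qed

lemma T_f1: assumes h1: "sg k t0 + sg k t1 = (t0::'a)" and h2: "sg k t0 = t1" shows "t0 = 0 \<and> t1 = 0"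
proof -
  have "sg k (sg k t0) = sg k t1" using h2 by simp
  also have "\<dots> = t0 + sg k t0" using h1 add_self_char2[OF two, of "sg k t0"]
    by (metis add.assoc add.commute add_0)
  finally have "t0 = 0 \<or> t0 = 1" by (rule Tlem)
  then have st: "sg k t0 = t0" using SG by auto
  then have "t1 = t0" using h2 by simp
  then have "t0 + t0 = t0" using h1 st by simp
  then have "t0 = 0" using add_self_char2[OF two, of t0] by simp
  then show ?thesis using \<open>t1 = t0\<close> by simp
qed

lemma T_f2: assumes h1: "sg k t0 = (t1::'a)" and h2: "sg k t1 = t0 + t1" shows "t0 = 0 \<and> t1 = 0"
proof -
  have "sg k (sg k t0) = t0 + sg k t0" using h1 h2 by simp
  then have "t0 = 0 \<or> t0 = 1" by (rule Tlem)
  then have st: "sg k t0 = t0" using SG by auto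
  then have "t1 = t0" using h1 by simp
  then have "t0 + t0 = t0" using h2 st by simp
  then have "t0 = 0" using add_self_char2[OF two, of t0] by simp
  then show ?thesis using \<open>t1 = t0\<close> by simp
qed

lemma ND1: "1 + sg k c + c * sg k c \<noteq> (0::'a)"
proof
  assume h: "1 + sg k c + c * sg k c = 0"
  define c1 c2 c3 where "c1 = sg k c" and "c2 = sg k c1" and "c3 = sg k c2"
  have h0: "1 + c1 + c*c1 = 0" using h c1_def by simp
  have "sg k (1 + c1 + c*c1) = sg k 0" using h0 by simp
  then have h1: "1 + c2 + c1*c2 = 0" by (simp only: c1_def[symmetric] c2_def[symmetric] SG)
  have "sg k (1 + c2 + c1*c2) = sg k 0" using h1 by simp
  then have h2: "1 + c3 + c2*c3 = 0" by (simp only: c2_def[symmetric] c3_def[symmetric] SG)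
  have "c*c2 = 1 + c" using nd1_a[OF two, where c=c and cq=c1 and cqq=c2] h0 h1 by simp
  then have "c*c2 + 1 + c = 0" using add_self_char2[OF two, of "1+c"] by (simp add: add.assoc)
  then have "c3 + c = 0" using nd1_cert[OF two, where c=c and cqq=c2 and cqqq=c3] h2 by simp
  then have "c3 = c" using addeq by simp
  then have "c = 0 \<or> c = 1" using fix3 c1_def c2_def c3_def by simp
  then show False using h two SG by auto
qed

lemma rot_add: "rot (u + v) = rot u + (rot v :: 'a \<times> 'a)"
  by (cases u, cases v) (simp add: rot_def algebra_simps)
lemma rot3: "rot (rot (rot z)) = (z::'a\<times>'a)"
  by (cases z) (simp add: rot_def c2a[OF two] c2c[OF two])
lemma rot_rel: "rot z + z = rot (rot (z::'a\<times>'a))"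
  by (cases z) (simp add: rot_def c2a[OF two] c2d[OF two] add.commute)
lemma rot_fix: "rot z = z \<Longrightarrow> z = (0::'a\<times>'a)"
  by (cases z) (auto simp: rot_def prod_eq_iff)
lemma rot_inj: "rot u = rot v \<Longrightarrow> u = (v::'a\<times>'a)"
  by (metis rot3)
lemma negp: "- (z::'a\<times>'a) = z"
  by (cases z) (metis neg_char2[OF two] uminus_Pair)

lemma ker_rot:
  fixes F :: "'a \<times> 'a \<Rightarrow> 'b::ab_group_add"
  assumes Linv: "\<And>z. F (rot z) = F z"
    and ker1: "\<And>a u. fst a \<noteq> 0 \<Longrightarrow> F(u+a) - F u - F a = 0 \<Longrightarrow> u = 0 \<or> u = a"
    and a0: "a \<noteq> 0" and h: "F(u+a) - F u - F a = 0"
  shows "u = 0 \<or> u = a"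
proof (cases "fst a = 0")
  case False then show ?thesis using ker1 h by blast
next
  case True
  then have "fst (rot a) \<noteq> 0" using a0 by (cases a) (simp add: rot_def zero_prod_def)
  moreover have "F(rot u + rot a) - F (rot u) - F (rot a) = 0"
    using h Linv rot_add[of u a] by metis
  ultimately have "rot u = 0 \<or> rot u = rot a" using ker1 by blast
  moreover have "rot 0 = (0::'a\<times>'a)" by (simp add: rot_def zero_prod_def)
  ultimately show ?thesis using rot_inj by metis
qed

lemma f1_core:
  fixes c cq cqq l lq lqq w wq wqq :: 'a
  assumes hc1: "cq = sg k c" and hc2: "cqq = sg k cq" and hl1: "lq = sg k l" and hl2: "lqq = sg k lq"
    and hw1: "wq = sg k w" and hw2: "wqq = sg k wq"
    and ea: "((l+lq)*(1+cq+c*cq) + (1+c)*wq + w*cq) = 0" and eb: "((l+lqq)*(1+c+c*cqq) + w*(1+cqq) + c*wqq) = 0"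
  shows "w = 0 \<and> (l = 0 \<or> l = 1)"
proof -
  have bk: "sg k c = cq" "sg k cq = cqq" "sg k l = lq" "sg k lq = lqq" "sg k w = wq" "sg k wq = wqq"
    using assms by simp_all
  from ea have "sg k ((l+lq)*(1+cq+c*cq) + (1+c)*wq + w*cq) = sg k 0" by (rule arg_cong)
  then have e1s: "((lq+lqq)*(1+cqq+cq*cqq) + (1+cq)*wqq + wq*cqq) = 0" by (simp only: SG bk)
  have ell: "((1+cqq+cq*cqq)^2*w + (1+c+c*cqq)^2*wq + (1+cq+c*cq)^2*wqq) = 0" using f1_ell[OF two, where c=c and cq=cq and cqq=cqq and l=l and lq=lq and lqq=lqq and w=w and wq=wq and wqq=wqq]
    unfolding ea e1s eb by simp
  have Ra: "(1+cq+c*cq)^2*((wqq + cq^2*wqq + wq)+(cq^2*wqq + cqq^2*wq + wq)) = (1+cqq+cq*cqq)^2*(wq + c^2*wq + w)"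
    using f1_R1[OF two, where c=c and cq=cq and cqq=cqq and w=w and wq=wq and wqq=wqq] unfolding ell by simp
  have Rb: "(1+cq+c*cq)^2*(wqq + cq^2*wqq + wq) = (1+cqq+cq*cqq)^2*(c^2*wq + cq^2*w + w)"
    using f1_R2[OF two, where c=c and cq=cq and cqq=cqq and w=w and wq=wq and wqq=wqq] unfolding ell by simp
  have qa: "(1+cq+c*cq) \<noteq> 0" using ND1[of c] bk by simp
  have qb: "(1+cqq+cq*cqq) \<noteq> 0" using ND1[of cq] bk by simp
  define ta where "ta = (wq + c^2*wq + w) / (1+cq+c*cq)^2"
  define tb where "tb = (c^2*wq + cq^2*w + w) / (1+cq+c*cq)^2"
  have sta: "sg k ta = (wqq + cq^2*wqq + wq) / (1+cqq+cq*cqq)^2" unfolding ta_def by (simp only: SG bk)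
  have stb: "sg k tb = (cq^2*wqq + cqq^2*wq + wq) / (1+cqq+cq*cqq)^2" unfolding tb_def by (simp only: SG bk)
  have qa2: "(1+cq+c*cq)^2 \<noteq> 0" using qa by simp
  have qb2: "(1+cqq+cq*cqq)^2 \<noteq> 0" using qb by simp
  have "sg k ta + sg k tb = ta" unfolding sta stb unfolding ta_def by (rule fr1[OF qa2 qb2 Ra])
  moreover have "sg k ta = tb" unfolding sta unfolding tb_def by (rule fr2[OF qa2 qb2 Rb])
  ultimately have "ta = 0 \<and> tb = 0" by (rule T_f1)
  then have yx: "(wq + c^2*wq + w) = 0" and yy: "(c^2*wq + cq^2*w + w) = 0" using qa unfolding ta_def tb_def by simp_all
  have "wq * (1+cq+c*cq)^2 = 0" using f1_fin[OF two, where c=c and cq=cq and w=w and wq=wq] yx yy by simp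
  then have "wq = 0" using qa by simp
  then have wz: "w = 0" using hw1 sg_eq0[OF two] by simp
  then have "(l + lq) * (1+cq+c*cq) = 0" using ea \<open>wq = 0\<close> by simp
  then have "l + lq = 0" using qa by simp
  then have "lq = l" using addeq by simp
  then have "sg k l = l" using hl1 by simp
  then show ?thesis using wz fix1 by blast
qed

lemma f1_Badd: "f1 k (z1+z2+a) - f1 k (z1+z2) - f1 k (a::'a\<times>'a) = (f1 k (z1+a) - f1 k z1 - f1 k a) + (f1 k (z2+a) - f1 k z2 - f1 k a)"
  by (cases z1, cases z2, cases a) (simp add: f1_sg SG algebra_simps)

lemma f1_Linv: "f1 k (rot z) = f1 k (z::'a\<times>'a)"
proof (cases z)
  case (Pair x y) then show ?thesis
    by (simp only: rot_def fst_conv snd_conv f1_sg SG rot_Q1[OF two] rot_G1[OF two])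
qed

lemma f1_ker1:
  assumes sa: "fst a \<noteq> 0" and h: "f1 k (u+a) - f1 k u - f1 k a = (0::'a\<times>'a)"
  shows "u = 0 \<or> u = a"
proof -
  obtain x y where u: "u = (x,y)" by (cases u)
  obtain s t where a: "a = (s,t)" by (cases a)
  have s0: "s \<noteq> 0" using sa a by simp
  have hB: "f1 k (u+a) - f1 k u - f1 k a = (x*sg k s + s*sg k x + x*sg k t + s*sg k y + y*sg k t + t*sg k y,
      x*sg k (sg k s) + s*sg k (sg k x) + sg k (sg k x)*t + sg k (sg k s)*y + y*sg k (sg k t) + t*sg k (sg k y))"
    unfolding u a by (simp add: f1_sg SG algebra_simps)
  have B1: "x*sg k s + s*sg k x + x*sg k t + s*sg k y + y*sg k t + t*sg k y = 0"
    using h unfolding hB by (simp add: zero_prod_def)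
  have B2: "x*sg k (sg k s) + s*sg k (sg k x) + sg k (sg k x)*t + sg k (sg k s)*y + y*sg k (sg k t) + t*sg k (sg k y) = 0"
    using h unfolding hB by (simp add: zero_prod_def)
  define c l w where "c = t/s" and "l = x/s" and "w = y/s - l*c"
  have hx: "x = l*s" "y = (w+l*c)*s" "t = c*s" using s0 by (simp_all add: c_def l_def w_def field_simps)
  have hxq: "sg k x = sg k l * sg k s" "sg k y = (sg k w + sg k l * sg k c) * sg k s" "sg k t = sg k c * sg k s"
    using hx SG by simp_all
  have hxqq: "sg k (sg k x) = sg k (sg k l) * sg k (sg k s)"
      "sg k (sg k y) = (sg k (sg k w) + sg k (sg k l) * sg k (sg k c)) * sg k (sg k s)"
      "sg k (sg k t) = sg k (sg k c) * sg k (sg k s)"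
    using hx SG by simp_all
  have "s * sg k s * ((l + sg k l)*(1 + sg k c + c*sg k c) + (1+c)*sg k w + w*sg k c) = 0"
    using B1 unfolding norm_B1[OF two hx(1) hx(2) hx(3) hxq(1) hxq(2) hxq(3)] .
  then have E1: "((l + sg k l)*(1 + sg k c + c*sg k c) + (1+c)*sg k w + w*sg k c) = 0"
    using s0 SG by simp
  have "s * sg k (sg k s) * ((l + sg k (sg k l))*(1 + c + c*sg k (sg k c)) + w*(1 + sg k (sg k c)) + c*sg k (sg k w)) = 0"
    using B2 unfolding norm_B2a[OF two hx(1) hx(2) hx(3) hxqq(1) hxqq(2) hxqq(3)] .
  then have E2: "((l + sg k (sg k l))*(1 + c + c*sg k (sg k c)) + w*(1 + sg k (sg k c)) + c*sg k (sg k w)) = 0"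
    using s0 SG by simp
  have "w = 0 \<and> (l = 0 \<or> l = 1)"
    by (rule f1_core[OF refl refl refl refl refl refl E1 E2])
  then show ?thesis using hx u a by (auto simp: zero_prod_def)
qed

lemma f1_ker: "a \<noteq> 0 \<Longrightarrow> f1 k (u+a) - f1 k u - f1 k a = (0::'a\<times>'a) \<Longrightarrow> u = 0 \<or> u = a"
  using ker_rot[where F="f1 k", OF f1_Linv f1_ker1] by blast

lemma f1_APN: "APN (f1 k :: 'a\<times>'a \<Rightarrow> 'a\<times>'a)"
  by (rule APN_of_kernel[OF f1_Badd f1_ker negp])

lemma f1_a3: "almost_3_to_1 (f1 k :: 'a\<times>'a \<Rightarrow> 'a\<times>'a)"
  by (rule a3_of_kernel[OF f1_Badd f1_ker negp f1_Linv rot3 rot_fix rot_rel])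

context assumes modd: "odd m"
begin

lemma g2: "gcd (2*k) m = 1"
proof -
  have "coprime (3*k) m" using g3 by (simp add: coprime_iff_gcd_eq_1)
  then have "coprime (2*k) m" using modd by simp
  then show ?thesis by (simp add: coprime_iff_gcd_eq_1)
qed

lemma g6: "gcd (6*k) m = 1"
proof -
  have h3: "coprime (3*k) m" using g3 by (simp add: coprime_iff_gcd_eq_1)
  have c2: "coprime 2 m" using modd by simp
  have c: "coprime (2*(3*k)) m" by (rule coprime_mult_left_iff[THEN iffD2]) (use c2 h3 in blast)
  have e: "6*k = 2*(3*k)" by simp
  show ?thesis using c unfolding e coprime_iff_gcd_eq_1 .
qed

lemma fix2: "sg k (sg k (x::'a)) = x \<Longrightarrow> x = 0 \<or> x = 1"
  using fixed_F2[OF card g2] unfolding sg_sg by blast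

lemma fix6: assumes "sg k (sg k (sg k (sg k (sg k (sg k (x::'a)))))) = x" shows "x = 0 \<or> x = 1"
proof -
  have "sg k (sg k (sg k (sg k (sg k (sg k x))))) = x ^ (2^(6*k))"
  proof -
    have "sg k (sg k (sg k (sg k (sg k (sg k x))))) = (x ^ (2^(3*k))) ^ (2^(3*k))"
      by (simp only: sg_sg_sg)
    also have "\<dots> = x ^ (2^(6*k))" by (simp add: power_mult[symmetric] power_add[symmetric])
    finally show ?thesis .
  qed
  then show ?thesis using fixed_F2[OF card g6] assms by simp
qed

lemma ND3: "1 + c + c^2 \<noteq> (0::'a)"
proof
  assume h: "1 + c + c^2 = 0"
  have c2: "c^2 = 1 + c" using h addeq[of "1+c" "c^2"] by (simp add: add.commute)
  have one: "(1::'a) + 1 = 0" using add_self_char2[OF two] .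
  have sq: "(1 + c)^2 = c" using frob_sq[OF two, of 1 c] c2 one by (simp add: add.assoc[symmetric])
  have it: "c ^ (2^(2*i+1)) = 1 + c" for i
  proof (induction i)
    case 0 then show ?case using c2 by simp
  next
    case (Suc i)
    have "c ^ (2^(2*Suc i+1)) = ((c ^ (2^(2*i+1)))^2)^2"
      by (simp add: power_mult[symmetric] power_add ac_simps)
    also have "\<dots> = 1 + c" using Suc sq c2 by simp
    finally show ?case .
  qed
  obtain i where "m = 2*i+1" using modd oddE by blast
  then have "c ^ (2^m) = 1 + c" using it by simp
  moreover have "c ^ (2^m) = c" using field_power_card[of c] card by simp
  ultimately have "1 + c = c" by simp
  then show False by simp
qed

lemma ND2: "1 + c + c * sg k (sg k c) \<noteq> (0::'a)"
proof
  assume h: "1 + c + c * sg k (sg k c) = 0"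
  define x x1 x2 x3 where "x = c" and "x1 = sg k (sg k x)" and "x2 = sg k (sg k x1)" and "x3 = sg k (sg k x2)"
  have h0: "1 + x + x*x1 = 0" using h x_def x1_def by simp
  have "sg k (sg k (1 + x + x*x1)) = sg k (sg k 0)" using h0 by simp
  then have h1: "1 + x1 + x1*x2 = 0" by (simp only: x1_def[symmetric] x2_def[symmetric] SG)
  have "sg k (sg k (1 + x1 + x1*x2)) = sg k (sg k 0)" using h1 by simp
  then have h2: "1 + x2 + x2*x3 = 0" by (simp only: x2_def[symmetric] x3_def[symmetric] SG)
  have "x3 + x = 0" using nd2_cert[OF two, where x=x and xq=x1 and xqq=x2 and xqqq=x3] h0 h1 h2 by simp
  then have "x3 = x" using addeq by simp
  then have "x = 0 \<or> x = 1" using fix6 x1_def x2_def x3_def by simp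
  then show False using h0 two SG x1_def by auto
qed

lemma f2_core:
  fixes c cq cqq cqqq l lq lqq lqqq w wq wqq wqqq :: 'a
  assumes hc1: "cq = sg k c" and hc2: "cqq = sg k cq" and hc3: "cqqq = sg k cqq"
    and hl1: "lq = sg k l" and hl2: "lqq = sg k lq" and hl3: "lqqq = sg k lqq"
    and hw1: "wq = sg k w" and hw2: "wqq = sg k wq" and hw3: "wqqq = sg k wqq"
    and ea: "((l+lq)*(1+cq+c*cq) + (1+c)*wq + w*cq) = 0" and eb: "((l+lqqq)*(c+cqqq) + w + wqqq) = 0"
  shows "w = 0 \<and> (l = 0 \<or> l = 1)"
proof -
  have bk: "sg k c = cq" "sg k cq = cqq" "sg k cqq = cqqq" "sg k l = lq" "sg k lq = lqq" "sg k lqq = lqqq"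
     "sg k w = wq" "sg k wq = wqq" "sg k wqq = wqqq"
    using assms by simp_all
  from ea have "sg k ((l+lq)*(1+cq+c*cq) + (1+c)*wq + w*cq) = sg k 0" by (rule arg_cong)
  then have e1s: "((lq+lqq)*(1+cqq+cq*cqq) + (1+cq)*wqq + wq*cqq) = 0" by (simp only: SG bk)
  from e1s have "sg k ((lq+lqq)*(1+cqq+cq*cqq) + (1+cq)*wqq + wq*cqq) = sg k 0" by (rule arg_cong)
  then have e1ss: "((lqq+lqqq)*(1+cqqq+cqq*cqqq) + (1+cqq)*wqqq + wqq*cqqq) = 0" by (simp only: SG bk)
  have ell0: "0 = (1 + cq + cq*cqq + cq*cqq*cqqq + cq*cqq^2 + cq*cqq^2*cqqq + cq*cqqq + cqq + cqq^2)*((l+lq)*(c+cq) + w + wq) + (1 + c*cq + c*cq*cqq*cqqq + c*cqq + c*cqq*cqqq + c*cqqq + cq*cqq + cq*cqq*cqqq + cq*cqqq + cqq + cqqq)*((lq+lqq)*(cq+cqq) + wq + wqq) + (1 + c + c*cq + c*cq*cqq + c*cq^2 + c*cq^2*cqq + c*cqq + cq + cq^2)*((lqq+lqqq)*(cqq+cqqq) + wqq + wqqq)"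
    using f2_I1[OF two, where c=c and cq=cq and cqq=cqq and cqqq=cqqq and l=l and lq=lq and lqq=lqq and lqqq=lqqq and w=w and wq=wq and wqq=wqq and wqqq=wqqq]
    unfolding ea e1s e1ss eb by (simp only: mult_zero_left mult_zero_right add_0_left add_0_right)
  define r where "r = ((l+lq)*(c+cq) + w + wq)"
  define rq where "rq = sg k r"
  define rqq where "rqq = sg k rq"
  have hr1: "rq = ((lq+lqq)*(cq+cqq) + wq + wqq)" unfolding rq_def r_def by (simp only: SG bk)
  have hr2: "rqq = ((lqq+lqqq)*(cqq+cqqq) + wqq + wqqq)" unfolding rqq_def hr1 by (simp only: SG bk)
  have bkr: "sg k r = rq" "sg k rq = rqq" unfolding rq_def rqq_def by simp_all
  have ell: "((1 + cq + cq*cqq + cq*cqq*cqqq + cq*cqq^2 + cq*cqq^2*cqqq + cq*cqqq + cqq + cqq^2)*r + (1 + c*cq + c*cq*cqq*cqqq + c*cqq + c*cqq*cqqq + c*cqqq + cq*cqq + cq*cqq*cqqq + cq*cqqq + cqq + cqqq)*rq + (1 + c + c*cq + c*cq*cqq + c*cq^2 + c*cq^2*cqq + c*cqq + cq + cq^2)*rqq) = 0" unfolding r_def hr1 hr2 by (rule ell0[symmetric])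
  have Rz1: "((1+c+c*cqq)*(1+cq+cq^2))*(cq*cqq*rqq + cqq*rq + cqqq*rq + rq + rqq) + ((1+cq+cq*cqqq)*(1+cqq+cqq^2))*(c*cq*rq + c*rq + cq*cqq*r + cq*rq + r) = 0"
    using f2_Rz1[OF two, where c=c and cq=cq and cqq=cqq and cqqq=cqqq and r=r and rq=rq and rqq=rqq]
    unfolding ell by (simp only: mult_zero_right)
  have Rz2: "((1+c+c*cqq)*(1+cq+cq^2))*(cq*cqq*rqq + cq*rqq + cqq*cqqq*rq + cqq*rqq + rq) + ((1+cq+cq*cqqq)*(1+cqq+cqq^2))*((c*cq*rq + cq*r + cqq*r + r + rq)+(c*cq*rq + c*rq + cq*cqq*r + cq*rq + r)) = 0"
    using f2_Rz2[OF two, where c=c and cq=cq and cqq=cqq and cqqq=cqqq and r=r and rq=rq and rqq=rqq]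
    unfolding ell by (simp only: mult_zero_right)
  have nth: "(1+c+c*cqq) \<noteq> 0" using ND2[of c] bk by simp
  have nth1: "(1+cq+cq*cqqq) \<noteq> 0" using ND2[of cq] bk by simp
  have nn0: "(1+c+c^2) \<noteq> 0" using ND3[of c] by simp
  have nn1: "(1+cq+cq^2) \<noteq> 0" using ND3[of cq] by simp
  have nn2: "(1+cqq+cqq^2) \<noteq> 0" using ND3[of cqq] by simp
  have nk: "((1+c+c*cqq)*(1+cq+cq^2)) \<noteq> 0" using nth nn1 by simp
  have nsk: "((1+cq+cq*cqqq)*(1+cqq+cqq^2)) \<noteq> 0" using nth1 nn2 by simp
  define ta where "ta = (c*cq*rq + cq*r + cqq*r + r + rq) / ((1+c+c*cqq)*(1+cq+cq^2))"
  define tb where "tb = (c*cq*rq + c*rq + cq*cqq*r + cq*rq + r) / ((1+c+c*cqq)*(1+cq+cq^2))"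
  have sta: "sg k ta = (cq*cqq*rqq + cqq*rq + cqqq*rq + rq + rqq) / ((1+cq+cq*cqqq)*(1+cqq+cqq^2))" unfolding ta_def by (simp only: SG bk bkr)
  have stb: "sg k tb = (cq*cqq*rqq + cq*rqq + cqq*cqqq*rq + cqq*rqq + rq) / ((1+cq+cq*cqqq)*(1+cqq+cqq^2))" unfolding tb_def by (simp only: SG bk bkr)
  have "((1+c+c*cqq)*(1+cq+cq^2))*(cq*cqq*rqq + cqq*rq + cqqq*rq + rq + rqq) = ((1+cq+cq*cqqq)*(1+cqq+cqq^2))*(c*cq*rq + c*rq + cq*cqq*r + cq*rq + r)" using Rz1 addeq by simp
  then have "sg k ta = tb" unfolding sta unfolding tb_def by (rule fr2[OF nk nsk])
  moreover
  have "((1+cq+cq*cqqq)*(1+cqq+cqq^2))*((c*cq*rq + cq*r + cqq*r + r + rq)+(c*cq*rq + c*rq + cq*cqq*r + cq*rq + r)) = ((1+c+c*cqq)*(1+cq+cq^2))*(cq*cqq*rqq + cq*rqq + cqq*cqqq*rq + cqq*rqq + rq)" using Rz2 addeq by simp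
  then have "(c*cq*rq + cq*r + cqq*r + r + rq)/((1+c+c*cqq)*(1+cq+cq^2)) + (c*cq*rq + c*rq + cq*cqq*r + cq*rq + r)/((1+c+c*cqq)*(1+cq+cq^2)) = (cq*cqq*rqq + cq*rqq + cqq*cqqq*rq + cqq*rqq + rq)/((1+cq+cq*cqqq)*(1+cqq+cqq^2))" by (rule fr1[OF nsk nk])
  then have "sg k tb = ta + tb" unfolding stb unfolding ta_def tb_def by simp
  ultimately have "ta = 0 \<and> tb = 0" by (rule T_f2)
  then have zx: "(c*cq*rq + cq*r + cqq*r + r + rq) = 0" and zy: "(c*cq*rq + c*rq + cq*cqq*r + cq*rq + r) = 0" using nk unfolding ta_def tb_def by simp_all
  have "(1+c+c*cqq)*(1+cq+cq^2)*r = 0"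
    using f2_Zfin[OF two, where c=c and cq=cq and cqq=cqq and r=r and rq=rq] unfolding zx zy by simp
  then have rz: "r = 0" using nth nn1 by simp
  then have "rq = 0" unfolding rq_def using SG by simp
  then have R0: "((l+lq)*(c+cq) + w + wq) = 0" and R1: "((lq+lqq)*(cq+cqq) + wq + wqq) = 0" using rz unfolding r_def hr1 by simp_all
  have "(1+cq+cq^2)*((1+c+c^2)*(lqq*(1+cqq+cqq^2) + wqq*cqq) + (1+cqq+cqq^2)*(l*(1+c+c^2) + w*c)) = 0"
    using f2_I3x[OF two, where c=c and cq=cq and cqq=cqq and l=l and lq=lq and lqq=lqq and w=w and wq=wq and wqq=wqq]
    unfolding ea e1s R0 R1 by simp
  then have "(1+c+c^2)*(lqq*(1+cqq+cqq^2) + wqq*cqq) + (1+cqq+cqq^2)*(l*(1+c+c^2) + w*c) = 0" using nn1 by simp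
  then have "(1+c+c^2)*(lqq*(1+cqq+cqq^2) + wqq*cqq) = (1+cqq+cqq^2)*(l*(1+c+c^2) + w*c)" using addeq by simp
  then have fx: "(lqq*(1+cqq+cqq^2) + wqq*cqq)/(1+cqq+cqq^2) = (l*(1+c+c^2) + w*c)/(1+c+c^2)" by (rule fr2[OF nn0 nn2])
  have "(1+cq+cq^2)*((1+c+c^2)*wqq + (1+cqq+cqq^2)*w) = 0"
    using f2_I3y[OF two, where c=c and cq=cq and cqq=cqq and l=l and lq=lq and lqq=lqq and w=w and wq=wq and wqq=wqq]
    unfolding ea e1s R0 R1 by simp
  then have "(1+c+c^2)*wqq + (1+cqq+cqq^2)*w = 0" using nn1 by simp
  then have "(1+c+c^2)*wqq = (1+cqq+cqq^2)*w" using addeq by simp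
  then have fy: "wqq/(1+cqq+cqq^2) = w/(1+c+c^2)" by (rule fr2[OF nn0 nn2])
  define pp where "pp = (l*(1+c+c^2) + w*c)/(1+c+c^2)"
  define qq where "qq = w/(1+c+c^2)"
  have "sg k (sg k pp) = pp" unfolding pp_def using fx by (simp only: SG bk)
  then have pp01: "pp = 0 \<or> pp = 1" by (rule fix2)
  have "sg k (sg k qq) = qq" unfolding qq_def using fy by (simp only: SG bk)
  then have qq01: "qq = 0 \<or> qq = 1" by (rule fix2)
  have spp: "sg k pp = pp" using pp01 SG by auto
  have sqq: "sg k qq = qq" using qq01 SG by auto
  have hw: "w = qq*(1+c+c^2)" unfolding qq_def using nn0 by simp
  have "(l*(1+c+c^2) + w*c) = pp*(1+c+c^2)" unfolding pp_def using nn0 by simp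
  then have "(l + qq*c)*(1+c+c^2) = pp*(1+c+c^2)" unfolding hw by (simp add: algebra_simps)
  then have "l + qq*c = pp" using nn0 by simp
  then have hl: "l = pp + qq*c" using neg_char2[OF two, of "qq*c"] by (metis add_diff_cancel diff_conv_add_uminus)
  have hl1': "lq = pp + qq*cq" using hl hl1 spp sqq bk SG by simp
  have hw1': "wq = qq*(1+cq+cq^2)" using hw hw1 sqq bk SG by simp
  have "((l+lq)*(1+cq+c*cq) + (1+c)*wq + w*cq) = qq*(1+cq+c*cq)" by (rule f2_fin[OF two hl hw hl1' hw1'])
  then have "qq*(1+cq+c*cq) = 0" using ea by simp
  moreover have "1+cq+c*cq \<noteq> 0" using ND1[of c] bk by simp
  ultimately have "qq = 0" by simp
  then show ?thesis using hw hl pp01 by simp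
qed

lemma f2_Badd: "f2 k (z1+z2+a) - f2 k (z1+z2) - f2 k (a::'a\<times>'a) = (f2 k (z1+a) - f2 k z1 - f2 k a) + (f2 k (z2+a) - f2 k z2 - f2 k a)"
  by (cases z1, cases z2, cases a) (simp add: f2_sg SG algebra_simps)

lemma f2_Linv: "f2 k (rot z) = f2 k (z::'a\<times>'a)"
proof (cases z)
  case (Pair x y) then show ?thesis
    by (simp only: rot_def fst_conv snd_conv f2_sg SG rot_Q1[OF two] rot_G2[OF two])
qed

lemma f2_ker1:
  assumes sa: "fst a \<noteq> 0" and h: "f2 k (u+a) - f2 k u - f2 k a = (0::'a\<times>'a)"
  shows "u = 0 \<or> u = a"
proof -
  obtain x y where u: "u = (x,y)" by (cases u)
  obtain s t where a: "a = (s,t)" by (cases a)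
  have s0: "s \<noteq> 0" using sa a by simp
  have hB: "f2 k (u+a) - f2 k u - f2 k a = (x*sg k s + s*sg k x + x*sg k t + s*sg k y + y*sg k t + t*sg k y,
      sg k (sg k (sg k x))*t + sg k (sg k (sg k s))*y + x*sg k (sg k (sg k t)) + s*sg k (sg k (sg k y)))"
    unfolding u a by (simp add: f2_sg SG algebra_simps)
  have B1: "x*sg k s + s*sg k x + x*sg k t + s*sg k y + y*sg k t + t*sg k y = 0"
    using h unfolding hB by (simp add: zero_prod_def)
  have B2: "sg k (sg k (sg k x))*t + sg k (sg k (sg k s))*y + x*sg k (sg k (sg k t)) + s*sg k (sg k (sg k y)) = 0"
    using h unfolding hB by (simp add: zero_prod_def)
  define c l w where "c = t/s" and "l = x/s" and "w = y/s - l*c"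
  have hx: "x = l*s" "y = (w+l*c)*s" "t = c*s" using s0 by (simp_all add: c_def l_def w_def field_simps)
  have hxq: "sg k x = sg k l * sg k s" "sg k y = (sg k w + sg k l * sg k c) * sg k s" "sg k t = sg k c * sg k s"
    using hx SG by simp_all
  have hxqqq: "sg k (sg k (sg k x)) = sg k (sg k (sg k l)) * sg k (sg k (sg k s))"
      "sg k (sg k (sg k y)) = (sg k (sg k (sg k w)) + sg k (sg k (sg k l)) * sg k (sg k (sg k c))) * sg k (sg k (sg k s))"
      "sg k (sg k (sg k t)) = sg k (sg k (sg k c)) * sg k (sg k (sg k s))"
    using hx SG by simp_all
  have "s * sg k s * ((l + sg k l)*(1 + sg k c + c*sg k c) + (1+c)*sg k w + w*sg k c) = 0"
    using B1 unfolding norm_B1[OF two hx(1) hx(2) hx(3) hxq(1) hxq(2) hxq(3)] .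
  then have E1: "((l + sg k l)*(1 + sg k c + c*sg k c) + (1+c)*sg k w + w*sg k c) = 0"
    using s0 SG by simp
  have "s * sg k (sg k (sg k s)) * ((l + sg k (sg k (sg k l)))*(c + sg k (sg k (sg k c))) + w + sg k (sg k (sg k w))) = 0"
    using B2 unfolding norm_B2b[OF two hx(1) hx(2) hx(3) hxqqq(1) hxqqq(2) hxqqq(3)] .
  then have E2: "((l + sg k (sg k (sg k l)))*(c + sg k (sg k (sg k c))) + w + sg k (sg k (sg k w))) = 0"
    using s0 SG by simp
  have "w = 0 \<and> (l = 0 \<or> l = 1)"
    by (rule f2_core[OF refl refl refl refl refl refl refl refl refl E1 E2])
  then show ?thesis using hx u a by (auto simp: zero_prod_def)
qed

lemma f2_ker: "a \<noteq> 0 \<Longrightarrow> f2 k (u+a) - f2 k u - f2 k a = (0::'a\<times>'a) \<Longrightarrow> u = 0 \<or> u = a"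
  using ker_rot[where F="f2 k", OF f2_Linv f2_ker1] by blast

lemma f2_APN: "APN (f2 k :: 'a\<times>'a \<Rightarrow> 'a\<times>'a)"
  by (rule APN_of_kernel[OF f2_Badd f2_ker negp])

lemma f2_a3: "almost_3_to_1 (f2 k :: 'a\<times>'a \<Rightarrow> 'a\<times>'a)"
  by (rule a3_of_kernel[OF f2_Badd f2_ker negp f2_Linv rot3 rot_fix rot_rel])

end

end

theorem theorem4p8:
  fixes m k :: nat
  assumes "m > 0" and "k > 0"
    and "card (UNIV :: 'a::{field,finite} set) = 2 ^ m"
  shows "(gcd (3 * k) m = 1 \<longrightarrow>
            APN (f1 k :: 'a \<times> 'a \<Rightarrow> 'a \<times> 'a) \<and> almost_3_to_1 (f1 k :: 'a \<times> 'a \<Rightarrow> 'a \<times> 'a))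
       \<and> (gcd (3 * k) m = 1 \<and> odd m \<longrightarrow>
            APN (f2 k :: 'a \<times> 'a \<Rightarrow> 'a \<times> 'a) \<and> almost_3_to_1 (f2 k :: 'a \<times> 'a \<Rightarrow> 'a \<times> 'a))"
proof (intro conjI impI)
  assume g: "gcd (3 * k) m = 1"
  show "APN (f1 k :: 'a \<times> 'a \<Rightarrow> 'a \<times> 'a)" by (rule f1_APN[OF assms(3) assms(1) g])
  show "almost_3_to_1 (f1 k :: 'a \<times> 'a \<Rightarrow> 'a \<times> 'a)" by (rule f1_a3[OF assms(3) assms(1) g])
next
  assume g: "gcd (3 * k) m = 1 \<and> odd m"
  show "APN (f2 k :: 'a \<times> 'a \<Rightarrow> 'a \<times> 'a)" by (rule f2_APN[OF assms(3) assms(1) conjunct1[OF g] conjunct2[OF g]])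
  show "almost_3_to_1 (f2 k :: 'a \<times> 'a \<Rightarrow> 'a \<times> 'a)" by (rule f2_a3[OF assms(3) assms(1) conjunct1[OF g] conjunct2[OF g]])
qed

end
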